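(* Let $S$ be a semigroup with finite $\mathcal{R}$-height whose kernel (minimal two-sided ideal) is completely simple, and let $B$ be a bi-ideal of $S$. Let $n$ be the maximum length of a chain of $\mathcal{R}$-classes of $S$ each of which intersects $B$. Then $\mathrm{H}_{\mathcal{R}}(B)\leq 3n-2$.
   Context: For a semigroup $S$, $S^1$ denotes $S$ with an identity adjoined if necessary. Green's preorder: $a\leq_{\mathcal{R}} b$ iff $aS^1\subseteq bS^1$; $\mathcal{R}$ is the associated equivalence. $\mathcal{R}$-classes are ordered by $R_a\leq R_b$ iff $a\leq_{\mathcal{R}} b$, and the $\mathcal{R}$-height $\mathrm{H}_{\mathcal{R}}(S)$ is the supremum of the cardinalities of chains of $\mathcal{R}$-classes. A bi-ideal of $S$ is a non-empty subset $B$ with $BS^1B\subseteq B$; its $\mathcal{R}$-height is computed in the semigroup $B$ itself. The kernel of $S$ is its unique minimal ideal (which exists when $S$ has finite $\mathcal{R}$-height). A semigroup is completely simple if it has no proper ideals and possesses both a minimal right ideal and a minimal left ideal. *)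

theory Defs
  imports "HOL-Library.Extended_Nat"
begin

text \<open>The semigroup S is the whole type 'a (class semigroup_mult); sub-semigroups
  (bi-ideals, the kernel) are carriers T :: 'a set, closed under multiplication.\<close>

text \<open>Green's R-preorder computed inside the semigroup with carrier T:
  a \<le>_R b iff a T^1 \<subseteq> b T^1, i.e. a = b or a = b t for some t in T.\<close>
definition Rle :: "'a::semigroup_mult set \<Rightarrow> 'a \<Rightarrow> 'a \<Rightarrow> bool" where
  "Rle T a b \<longleftrightarrow> a = b \<or> (\<exists>t\<in>T. a = b * t)"

definition Req :: "'a::semigroup_mult set \<Rightarrow> 'a \<Rightarrow> 'a \<Rightarrow> bool" where
  "Req T a b \<longleftrightarrow> Rle T a b \<and> Rle T b a"

definition Rclass :: "'a::semigroup_mult set \<Rightarrow> 'a \<Rightarrow> 'a set" where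
  "Rclass T a = {b \<in> T. Req T a b}"

definition Rclasses :: "'a::semigroup_mult set \<Rightarrow> 'a set set" where
  "Rclasses T = Rclass T ` T"

text \<open>R-classes are ordered by R_a \<le> R_b iff a \<le>_R b (independent of representatives).\<close>
definition Rclass_le :: "'a::semigroup_mult set \<Rightarrow> 'a set \<Rightarrow> 'a set \<Rightarrow> bool" where
  "Rclass_le T X Y \<longleftrightarrow> (\<exists>a\<in>X. \<exists>b\<in>Y. Rle T a b)"

definition Rchain :: "'a::semigroup_mult set \<Rightarrow> 'a set set \<Rightarrow> bool" where
  "Rchain T C \<longleftrightarrow> C \<subseteq> Rclasses T \<and>
     (\<forall>X\<in>C. \<forall>Y\<in>C. Rclass_le T X Y \<or> Rclass_le T Y X)"

text \<open>R-height: supremum of the cardinalities of chains of R-classes (infinite chains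
  yield arbitrarily large finite subchains, so it suffices to take finite ones).\<close>
definition R_height :: "'a::semigroup_mult set \<Rightarrow> enat" where
  "R_height T = Sup {enat (card C) | C. finite C \<and> Rchain T C}"

definition ideal_in :: "'a::semigroup_mult set \<Rightarrow> 'a set \<Rightarrow> bool" where
  "ideal_in T I \<longleftrightarrow> I \<noteq> {} \<and> I \<subseteq> T \<and> (\<forall>t\<in>T. \<forall>x\<in>I. t * x \<in> I \<and> x * t \<in> I)"

definition right_ideal_in :: "'a::semigroup_mult set \<Rightarrow> 'a set \<Rightarrow> bool" where
  "right_ideal_in T I \<longleftrightarrow> I \<noteq> {} \<and> I \<subseteq> T \<and> (\<forall>t\<in>T. \<forall>x\<in>I. x * t \<in> I)"

definition left_ideal_in :: "'a::semigroup_mult set \<Rightarrow> 'a set \<Rightarrow> bool" where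
  "left_ideal_in T I \<longleftrightarrow> I \<noteq> {} \<and> I \<subseteq> T \<and> (\<forall>t\<in>T. \<forall>x\<in>I. t * x \<in> I)"

definition minimal_right_ideal_in :: "'a::semigroup_mult set \<Rightarrow> 'a set \<Rightarrow> bool" where
  "minimal_right_ideal_in T I \<longleftrightarrow> right_ideal_in T I \<and>
     (\<forall>J. right_ideal_in T J \<and> J \<subseteq> I \<longrightarrow> J = I)"

definition minimal_left_ideal_in :: "'a::semigroup_mult set \<Rightarrow> 'a set \<Rightarrow> bool" where
  "minimal_left_ideal_in T I \<longleftrightarrow> left_ideal_in T I \<and>
     (\<forall>J. left_ideal_in T J \<and> J \<subseteq> I \<longrightarrow> J = I)"

definition is_kernel :: "'a::semigroup_mult set \<Rightarrow> bool" where
  "is_kernel K \<longleftrightarrow> ideal_in UNIV K \<and> (\<forall>J. ideal_in UNIV J \<and> J \<subseteq> K \<longrightarrow> J = K)"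

definition completely_simple :: "'a::semigroup_mult set \<Rightarrow> bool" where
  "completely_simple T \<longleftrightarrow> T \<noteq> {} \<and> (\<forall>x\<in>T. \<forall>y\<in>T. x * y \<in> T) \<and>
     (\<forall>I. ideal_in T I \<longrightarrow> I = T) \<and>
     (\<exists>R. minimal_right_ideal_in T R) \<and> (\<exists>L. minimal_left_ideal_in T L)"

definition bi_ideal :: "'a::semigroup_mult set \<Rightarrow> bool" where
  "bi_ideal B \<longleftrightarrow> B \<noteq> {} \<and> (\<forall>a\<in>B. \<forall>b\<in>B. a * b \<in> B \<and> (\<forall>s. a * s * b \<in> B))"

end

theory Submission
  imports Defs
begin

lemma finite_total_max:
  assumes "finite A" "A \<noteq> {}" "\<forall>x\<in>A. \<forall>y\<in>A. R x y \<or> R y x"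
    and tr: "\<forall>x y z. R x y \<longrightarrow> R y z \<longrightarrow> R x z"
  shows "\<exists>m\<in>A. \<forall>x\<in>A. R x m"
  using assms(1,2,3)
proof (induction A rule: finite_ne_induct)
  case (singleton x) thus ?case by auto
next
  case (insert x F)
  from insert.prems have "\<forall>a\<in>F. \<forall>b\<in>F. R a b \<or> R b a" by auto
  with insert.IH obtain m where m: "m\<in>F" "\<forall>y\<in>F. R y m" by auto
  show ?case
  proof (cases "R x m")
    case True thus ?thesis using m by auto
  next
    case False
    with insert.prems m(1) have "R m x" by auto
    hence "\<forall>y\<in>insert x F. R y x" using m(2) tr insert.prems by blast
    thus ?thesis by auto
  qed
qed

lemma Rle_refl: "Rle T a a" by (simp add: Rle_def)

lemma Rle_trans:
  assumes cl: "\<forall>x\<in>T. \<forall>y\<in>T. x*y \<in> T" and "Rle T a b" "Rle T b c"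
  shows "Rle T a c"
proof -
  from assms(2) have ab: "a = b \<or> (\<exists>t\<in>T. a = b*t)" by (simp add: Rle_def)
  from assms(3) have bc: "b = c \<or> (\<exists>t\<in>T. b = c*t)" by (simp add: Rle_def)
  show ?thesis
  proof (cases "a = b")
    case True thus ?thesis using assms(3) by simp
  next
    case False
    then obtain t where t: "t\<in>T" "a = b*t" using ab by blast
    show ?thesis
    proof (cases "b = c")
      case True thus ?thesis using assms(2) by simp
    next
      case False
      then obtain t' where t': "t'\<in>T" "b = c*t'" using bc by blast
      have "a = c*(t'*t)" using t t' by (simp add: mult.assoc)
      moreover have "t'*t \<in> T" using cl t t' by blast
      ultimately show ?thesis by (auto simp: Rle_def)
    qed
  qed
qed

lemma Rle_UNIV_trans: "Rle UNIV a b \<Longrightarrow> Rle UNIV b c \<Longrightarrow> Rle UNIV a c"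
  by (rule Rle_trans[of UNIV]) auto

lemma Rle_mono: "T \<subseteq> U \<Longrightarrow> Rle T a b \<Longrightarrow> Rle U a b"
  by (auto simp: Rle_def)

lemma Req_refl: "Req T a a" by (simp add: Req_def Rle_refl)

section \<open>Completely simple kernel\<close>

lemma cs_cl: "completely_simple K \<Longrightarrow> x \<in> K \<Longrightarrow> y \<in> K \<Longrightarrow> x*y \<in> K"
  by (simp add: completely_simple_def)

lemma cs_P1:
  assumes cs: "completely_simple K" and x: "x \<in> K" and y: "y \<in> K"
  shows "\<exists>k\<in>K. \<exists>k'\<in>K. y = k*x*k'"
proof -
  let ?I = "{k*x*k' | k k'. k \<in> K \<and> k' \<in> K}"
  have cl: "\<And>a b. a\<in>K \<Longrightarrow> b\<in>K \<Longrightarrow> a*b\<in>K" using cs by (simp add: completely_simple_def)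
  have ne: "?I \<noteq> {}" using x by blast
  have sub: "?I \<subseteq> K" using cl x by blast
  have clo: "t*z \<in> ?I \<and> z*t \<in> ?I" if t: "t \<in> K" and z: "z \<in> ?I" for t z
  proof -
    obtain k k' where kk: "k\<in>K" "k'\<in>K" "z = k*x*k'" using z by blast
    have "t*z = (t*k)*x*k'" "z*t = k*x*(k'*t)" using kk by (simp_all add: mult.assoc)
    thus ?thesis using kk t cl by blast
  qed
  have "ideal_in K ?I" unfolding ideal_in_def using ne sub clo by blast
  hence "?I = K" using cs by (simp add: completely_simple_def)
  thus ?thesis using y by blast
qed

lemma cs_minR:
  assumes cs: "completely_simple K" and a: "a \<in> K"
  shows "\<exists>M. minimal_right_ideal_in K M \<and> a \<in> M"
proof -
  have cl: "\<And>a b. a\<in>K \<Longrightarrow> b\<in>K \<Longrightarrow> a*b\<in>K" using cs by (simp add: completely_simple_def)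
  have "\<exists>R. minimal_right_ideal_in K R" using cs by (simp add: completely_simple_def)
  then obtain R0 where R0: "minimal_right_ideal_in K R0" by blast
  hence R0r: "right_ideal_in K R0" and R0m: "\<And>J. right_ideal_in K J \<Longrightarrow> J \<subseteq> R0 \<Longrightarrow> J = R0"
    by (auto simp: minimal_right_ideal_in_def)
  from R0r have R0K: "R0 \<subseteq> K" and R0c: "\<And>z t. z\<in>R0 \<Longrightarrow> t\<in>K \<Longrightarrow> z*t\<in>R0" and "R0 \<noteq> {}"
    by (auto simp: right_ideal_in_def)
  then obtain r where r: "r \<in> R0" by blast
  have rK: "r \<in> K" using r R0K by blast
  obtain k k' where kk: "k\<in>K" "k'\<in>K" "a = k*r*k'" using cs_P1[OF cs rK a] by blast
  let ?M = "(\<lambda>z. k*z) ` R0"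
  have "a = k*(r*k')" using kk by (simp add: mult.assoc)
  hence aM: "a \<in> ?M" using R0c[OF r kk(2)] by blast
  have Mr: "right_ideal_in K ?M"
    unfolding right_ideal_in_def
  proof (intro conjI ballI)
    show "?M \<noteq> {}" using r by blast
    show "?M \<subseteq> K" using R0K cl kk by blast
  next
    fix t x assume t: "t \<in> K" and x: "x \<in> ?M"
    then obtain z where z: "z\<in>R0" "x = k*z" by blast
    hence "x*t = k*(z*t)" by (simp add: mult.assoc)
    thus "x*t \<in> ?M" using R0c[OF z(1) t] by blast
  qed
  have "J = ?M" if J: "right_ideal_in K J" "J \<subseteq> ?M" for J
  proof -
    let ?J' = "{z\<in>R0. k*z \<in> J}"
    from J have Jne: "J \<noteq> {}" and Jc: "\<And>x t. x\<in>J \<Longrightarrow> t\<in>K \<Longrightarrow> x*t\<in>J"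
      by (auto simp: right_ideal_in_def)
    have "right_ideal_in K ?J'"
      unfolding right_ideal_in_def
    proof (intro conjI ballI)
      show "?J' \<noteq> {}" using Jne J(2) by blast
      show "?J' \<subseteq> K" using R0K by blast
    next
      fix t z assume t: "t\<in>K" and z: "z \<in> ?J'"
      have "k*(z*t) = (k*z)*t" by (simp add: mult.assoc)
      thus "z*t \<in> ?J'" using z t Jc R0c by auto
    qed
    hence J'R0: "?J' = R0" using R0m by blast
    have "?M \<subseteq> J"
    proof
      fix y assume "y \<in> ?M"
      then obtain z where z: "z\<in>R0" "y = k*z" by blast
      hence "z \<in> ?J'" using J'R0 by simp
      thus "y \<in> J" using z by simp
    qed
    thus ?thesis using J(2) by blast
  qed
  hence "minimal_right_ideal_in K ?M" using Mr by (auto simp: minimal_right_ideal_in_def)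
  thus ?thesis using aM by blast
qed

lemma cs_minL:
  assumes cs: "completely_simple K" and a: "a \<in> K"
  shows "\<exists>M. minimal_left_ideal_in K M \<and> a \<in> M"
proof -
  have cl: "\<And>a b. a\<in>K \<Longrightarrow> b\<in>K \<Longrightarrow> a*b\<in>K" using cs by (simp add: completely_simple_def)
  have "\<exists>R. minimal_left_ideal_in K R" using cs by (simp add: completely_simple_def)
  then obtain R0 where R0: "minimal_left_ideal_in K R0" by blast
  hence R0r: "left_ideal_in K R0" and R0m: "\<And>J. left_ideal_in K J \<Longrightarrow> J \<subseteq> R0 \<Longrightarrow> J = R0"
    by (auto simp: minimal_left_ideal_in_def)
  from R0r have R0K: "R0 \<subseteq> K" and R0c: "\<And>z t. z\<in>R0 \<Longrightarrow> t\<in>K \<Longrightarrow> t*z\<in>R0" and "R0 \<noteq> {}"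
    by (auto simp: left_ideal_in_def)
  then obtain r where r: "r \<in> R0" by blast
  have rK: "r \<in> K" using r R0K by blast
  obtain k k' where kk: "k\<in>K" "k'\<in>K" "a = k*r*k'" using cs_P1[OF cs rK a] by blast
  let ?M = "(\<lambda>z. z*k') ` R0"
  have "a = (k*r)*k'" using kk by (simp add: mult.assoc)
  hence aM: "a \<in> ?M" using R0c[OF r kk(1)] by blast
  have Mr: "left_ideal_in K ?M"
    unfolding left_ideal_in_def
  proof (intro conjI ballI)
    show "?M \<noteq> {}" using r by blast
    show "?M \<subseteq> K" using R0K cl kk by blast
  next
    fix t x assume t: "t \<in> K" and x: "x \<in> ?M"
    then obtain z where z: "z\<in>R0" "x = z*k'" by blast
    hence "t*x = (t*z)*k'" by (simp add: mult.assoc)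
    thus "t*x \<in> ?M" using R0c[OF z(1) t] by blast
  qed
  have "J = ?M" if J: "left_ideal_in K J" "J \<subseteq> ?M" for J
  proof -
    let ?J' = "{z\<in>R0. z*k' \<in> J}"
    from J have Jne: "J \<noteq> {}" and Jc: "\<And>x t. x\<in>J \<Longrightarrow> t\<in>K \<Longrightarrow> t*x\<in>J"
      by (auto simp: left_ideal_in_def)
    have "left_ideal_in K ?J'"
      unfolding left_ideal_in_def
    proof (intro conjI ballI)
      show "?J' \<noteq> {}" using Jne J(2) by blast
      show "?J' \<subseteq> K" using R0K by blast
    next
      fix t z assume t: "t\<in>K" and z: "z \<in> ?J'"
      have "(t*z)*k' = t*(z*k')" by (simp add: mult.assoc)
      thus "t*z \<in> ?J'" using z t Jc R0c by auto
    qed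
    hence J'R0: "?J' = R0" using R0m by blast
    have "?M \<subseteq> J"
    proof
      fix y assume "y \<in> ?M"
      then obtain z where z: "z\<in>R0" "y = z*k'" by blast
      hence "z \<in> ?J'" using J'R0 by simp
      thus "y \<in> J" using z by simp
    qed
    thus ?thesis using J(2) by blast
  qed
  hence "minimal_left_ideal_in K ?M" using Mr by (auto simp: minimal_left_ideal_in_def)
  thus ?thesis using aM by blast
qed

lemma minR_gen:
  assumes M: "minimal_right_ideal_in K M" and x: "x \<in> M"
    and cl: "\<And>a b. a\<in>K \<Longrightarrow> b\<in>K \<Longrightarrow> a*b\<in>K"
  shows "M \<subseteq> (\<lambda>k. x*k) ` K" "M \<subseteq> (\<lambda>m. x*m) ` M"
proof -
  from M have Mr: "right_ideal_in K M" and Mm: "\<And>J. right_ideal_in K J \<Longrightarrow> J \<subseteq> M \<Longrightarrow> J = M"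
    by (auto simp: minimal_right_ideal_in_def)
  from Mr have MK: "M \<subseteq> K" and Mc: "\<And>z t. z\<in>M \<Longrightarrow> t\<in>K \<Longrightarrow> z*t\<in>M"
    by (auto simp: right_ideal_in_def)
  have "right_ideal_in K ((\<lambda>k. x*k) ` K)"
    unfolding right_ideal_in_def
  proof (intro conjI ballI)
    show "(\<lambda>k. x*k) ` K \<noteq> {}" using x MK by blast
    show "(\<lambda>k. x*k) ` K \<subseteq> K" using Mc x MK by blast
  next
    fix t y assume t: "t\<in>K" and y: "y \<in> (\<lambda>k. x*k) ` K"
    then obtain k where k: "k\<in>K" "y = x*k" by blast
    hence "y*t = x*(k*t)" by (simp add: mult.assoc)
    moreover have "k*t \<in> K" using k t cl by blast
    ultimately show "y*t \<in> (\<lambda>k. x*k) ` K" by blast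
  qed
  moreover have "(\<lambda>k. x*k) ` K \<subseteq> M" using Mc x by blast
  ultimately show "M \<subseteq> (\<lambda>k. x*k) ` K" using Mm by blast
  have "right_ideal_in K ((\<lambda>k. x*k) ` M)"
    unfolding right_ideal_in_def
  proof (intro conjI ballI)
    show "(\<lambda>k. x*k) ` M \<noteq> {}" using x by blast
    show "(\<lambda>k. x*k) ` M \<subseteq> K" using Mc x MK by blast
  next
    fix t y assume t: "t\<in>K" and y: "y \<in> (\<lambda>k. x*k) ` M"
    then obtain k where k: "k\<in>M" "y = x*k" by blast
    hence "y*t = x*(k*t)" by (simp add: mult.assoc)
    moreover have "k*t \<in> M" using k t Mc by blast
    ultimately show "y*t \<in> (\<lambda>k. x*k) ` M" by blast
  qed
  moreover have "(\<lambda>k. x*k) ` M \<subseteq> M" using Mc x MK by blast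
  ultimately show "M \<subseteq> (\<lambda>k. x*k) ` M" using Mm by blast
qed

lemma minL_gen:
  assumes M: "minimal_left_ideal_in K M" and x: "x \<in> M"
    and cl: "\<And>a b. a\<in>K \<Longrightarrow> b\<in>K \<Longrightarrow> a*b\<in>K"
  shows "M \<subseteq> (\<lambda>k. k*x) ` K" "M \<subseteq> (\<lambda>m. m*x) ` M"
proof -
  from M have Mr: "left_ideal_in K M" and Mm: "\<And>J. left_ideal_in K J \<Longrightarrow> J \<subseteq> M \<Longrightarrow> J = M"
    by (auto simp: minimal_left_ideal_in_def)
  from Mr have MK: "M \<subseteq> K" and Mc: "\<And>z t. z\<in>M \<Longrightarrow> t\<in>K \<Longrightarrow> t*z\<in>M"
    by (auto simp: left_ideal_in_def)
  have "left_ideal_in K ((\<lambda>k. k*x) ` K)"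
    unfolding left_ideal_in_def
  proof (intro conjI ballI)
    show "(\<lambda>k. k*x) ` K \<noteq> {}" using x MK by blast
    show "(\<lambda>k. k*x) ` K \<subseteq> K" using Mc x MK by blast
  next
    fix t y assume t: "t\<in>K" and y: "y \<in> (\<lambda>k. k*x) ` K"
    then obtain k where k: "k\<in>K" "y = k*x" by blast
    hence "t*y = (t*k)*x" by (simp add: mult.assoc)
    moreover have "t*k \<in> K" using k t cl by blast
    ultimately show "t*y \<in> (\<lambda>k. k*x) ` K" by blast
  qed
  moreover have "(\<lambda>k. k*x) ` K \<subseteq> M" using Mc x by blast
  ultimately show "M \<subseteq> (\<lambda>k. k*x) ` K" using Mm by blast
  have "left_ideal_in K ((\<lambda>k. k*x) ` M)"
    unfolding left_ideal_in_def
  proof (intro conjI ballI)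
    show "(\<lambda>k. k*x) ` M \<noteq> {}" using x by blast
    show "(\<lambda>k. k*x) ` M \<subseteq> K" using Mc x MK by blast
  next
    fix t y assume t: "t\<in>K" and y: "y \<in> (\<lambda>k. k*x) ` M"
    then obtain k where k: "k\<in>M" "y = k*x" by blast
    hence "t*y = (t*k)*x" by (simp add: mult.assoc)
    moreover have "t*k \<in> M" using k t Mc by blast
    ultimately show "t*y \<in> (\<lambda>k. k*x) ` M" by blast
  qed
  moreover have "(\<lambda>k. k*x) ` M \<subseteq> M" using Mc x MK by blast
  ultimately show "M \<subseteq> (\<lambda>k. k*x) ` M" using Mm by blast
qed


lemma cs_R1:
  assumes cs: "completely_simple K" and y: "y \<in> K"
  shows "\<exists>u\<in>K. y = y*y*u"
proof -
  have cl: "\<And>a b. a\<in>K \<Longrightarrow> b\<in>K \<Longrightarrow> a*b\<in>K" using cs by (simp add: completely_simple_def)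
  obtain M where M: "minimal_right_ideal_in K M" "y \<in> M" using cs_minR[OF cs y] by blast
  have Mc: "\<And>z t. z\<in>M \<Longrightarrow> t\<in>K \<Longrightarrow> z*t\<in>M" using M(1)
    by (auto simp: minimal_right_ideal_in_def right_ideal_in_def)
  have yy: "y*y \<in> M" using Mc[OF M(2) y] .
  have "M \<subseteq> (\<lambda>k. (y*y)*k) ` K" by (rule minR_gen(1)[OF M(1) yy cl])
  then obtain u where "u\<in>K" "y = y*y*u" using M(2) by blast
  thus ?thesis by blast
qed

lemma cs_reg:
  assumes cs: "completely_simple K" and a: "a \<in> K"
  shows "\<exists>w\<in>K. a = a*w*a"
proof -
  have cl: "\<And>a b. a\<in>K \<Longrightarrow> b\<in>K \<Longrightarrow> a*b\<in>K" using cs by (simp add: completely_simple_def)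
  obtain M where M: "minimal_right_ideal_in K M" "a \<in> M" using cs_minR[OF cs a] by blast
  obtain N where N: "minimal_left_ideal_in K N" "a \<in> N" using cs_minL[OF cs a] by blast
  have Mc: "\<And>z t. z\<in>M \<Longrightarrow> t\<in>K \<Longrightarrow> z*t\<in>M" and MK: "M \<subseteq> K" using M(1)
    by (auto simp: minimal_right_ideal_in_def right_ideal_in_def)
  have Nc: "\<And>z t. z\<in>N \<Longrightarrow> t\<in>K \<Longrightarrow> t*z\<in>N" and NK: "N \<subseteq> K" using N(1)
    by (auto simp: minimal_left_ideal_in_def left_ideal_in_def)
  have xM: "a*a \<in> M" using Mc[OF M(2) a] .
  have xN: "a*a \<in> N" using Nc[OF N(2) a] .
  obtain m where m: "m \<in> M" "a = (a*a)*m" using minR_gen(2)[OF M(1) xM cl] M(2) by blast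
  obtain n where n: "n \<in> N" "a = n*(a*a)" using minL_gen(2)[OF N(1) xN cl] N(2) by blast
  define e where "e = m*a"
  have xe: "(a*a)*e = a*a"
  proof -
    have "(a*a)*e = ((a*a)*m)*a" by (simp add: e_def mult.assoc)
    also have "\<dots> = a*a" using m(2)[symmetric] by simp
    finally show ?thesis .
  qed
  have e2: "e = (m*n)*(a*a)"
  proof -
    have "m*a = m*(n*(a*a))" using arg_cong[where f="\<lambda>z. m*z", OF n(2)] .
    thus ?thesis by (simp add: e_def mult.assoc)
  qed
  have ee: "e*e = e"
  proof -
    have "e*e = (m*n*(a*a))*e" using arg_cong[where f="\<lambda>z. z*e", OF e2] .
    also have "\<dots> = (m*n)*((a*a)*e)" by (simp add: mult.assoc)
    also have "\<dots> = (m*n)*(a*a)" using xe by simp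
    finally show ?thesis using e2 by simp
  qed
  have eN: "e \<in> N" using Nc[OF N(2)] m(1) MK unfolding e_def by blast
  obtain k where k: "k\<in>K" "a = k*e" using minL_gen(1)[OF N(1) eN cl] N(2) by blast
  have ae: "a*e = a"
  proof -
    have "a*e = (k*e)*e" using arg_cong[where f="\<lambda>z. z*e", OF k(2)] .
    also have "\<dots> = k*e" by (simp add: mult.assoc ee)
    finally show ?thesis using k(2) by simp
  qed
  obtain k1 where k1: "k1\<in>K" "m = a*k1" using minR_gen(1)[OF M(1) M(2) cl] m(1) by blast
  have "a = a*(a*k1)*a" using ae k1(2) unfolding e_def by (simp add: mult.assoc)
  thus ?thesis using cl a k1 by blast
qed

context
  fixes K B :: "'a::semigroup_mult set"
  assumes Kid: "ideal_in UNIV K" and cs: "completely_simple K" and bi: "bi_ideal B"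
begin

lemma Bcl: "x\<in>B \<Longrightarrow> y\<in>B \<Longrightarrow> x*y\<in>B" using bi by (simp add: bi_ideal_def)
lemma Bbi: "x\<in>B \<Longrightarrow> y\<in>B \<Longrightarrow> x*s*y\<in>B" using bi by (simp add: bi_ideal_def)
lemma KL: "x\<in>K \<Longrightarrow> t*x\<in>K" using Kid by (simp add: ideal_in_def)
lemma KR: "x\<in>K \<Longrightarrow> x*t\<in>K" using Kid by (simp add: ideal_in_def)
lemma Kne: "K \<noteq> {}" using Kid by (simp add: ideal_in_def)

lemma RleB_trans: "Rle B a b \<Longrightarrow> Rle B b c \<Longrightarrow> Rle B a c"
  using Rle_trans[of B a b c] Bcl by blast

lemma RleBS: "Rle B a b \<Longrightarrow> Rle UNIV a b" by (rule Rle_mono) auto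

lemma RleS_K: "Rle UNIV a b \<Longrightarrow> b \<in> K \<Longrightarrow> a \<in> K" by (auto simp: Rle_def intro: KR)

lemma A2:
  assumes x: "x\<in>B" "x\<in>K" and y: "y\<in>B" "y\<in>K" and le: "Rle UNIV x y"
  shows "Rle B x y"
proof (cases "x = y")
  case True thus ?thesis by (simp add: Rle_def)
next
  case False
  then obtain s where s: "x = y*s" using le by (auto simp: Rle_def)
  obtain u where u: "u\<in>K" "y = y*y*u" using cs_R1[OF cs y(2)] by blast
  obtain w where w: "w\<in>K" "x = x*w*x" using cs_reg[OF cs x(2)] by blast
  have e2: "y*s = y*y*u*s" using arg_cong[where f="\<lambda>z. z*s", OF u(2)] .
  have "x = x*w*x" by (rule w(2))
  also have "\<dots> = (y*s)*w*x" using s by simp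
  also have "\<dots> = (y*y*u*s)*w*x" by (simp only: e2)
  also have "\<dots> = y*(y*(u*s*w)*x)" by (simp add: mult.assoc)
  finally have "x = y*(y*(u*s*w)*x)" .
  moreover have "y*(u*s*w)*x \<in> B" using Bbi x y by blast
  ultimately show ?thesis by (auto simp: Rle_def)
qed

lemma four:
  assumes t: "t1\<in>B" "t3\<in>B" and e: "a1 = a2*t1" "a3 = a4*t3" and le: "Rle UNIV a4 a1"
  shows "Rle B a3 a2"
proof (cases "a4 = a1")
  case True
  hence "a3 = a2*(t1*t3)" using e by (simp add: mult.assoc)
  moreover have "t1*t3 \<in> B" using Bcl t by blast
  ultimately show ?thesis by (auto simp: Rle_def)
next
  case False
  then obtain s where s: "a4 = a1*s" using le by (auto simp: Rle_def)
  hence "a3 = a2*(t1*s*t3)" using e by (simp add: mult.assoc)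
  moreover have "t1*s*t3 \<in> B" using Bbi t by blast
  ultimately show ?thesis by (auto simp: Rle_def)
qed

lemma main:
  "finite A \<Longrightarrow> A \<noteq> {} \<Longrightarrow> A \<subseteq> B \<Longrightarrow> (\<forall>x\<in>A. \<forall>y\<in>A. Rle B x y \<or> Rle B y x) \<Longrightarrow>
   (\<forall>x\<in>A. \<forall>y\<in>A. Req B x y \<longrightarrow> x = y) \<Longrightarrow>
   \<exists>E. finite E \<and> E \<subseteq> B \<and> (\<forall>x\<in>E. \<forall>y\<in>E. Rle UNIV x y \<or> Rle UNIV y x)
      \<and> (\<forall>x\<in>E. \<forall>y\<in>E. Req UNIV x y \<longrightarrow> x = y) \<and> card A + 2 \<le> 3 * card E
      \<and> (\<forall>e\<in>E. \<exists>a\<in>A. Rle UNIV e a)"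
proof (induction "card A" arbitrary: A rule: less_induct)
  case less
  note fin = less.prems(1) and ne = less.prems(2) and AB = less.prems(3)
    and tot = less.prems(4) and dis = less.prems(5)
  have trB: "\<forall>x y z. Rle B x y \<longrightarrow> Rle B y z \<longrightarrow> Rle B x z" using RleB_trans by blast
  have trB': "\<forall>x y z. Rle B y x \<longrightarrow> Rle B z y \<longrightarrow> Rle B z x" using RleB_trans by blast
  have mx: "\<exists>m\<in>A'. \<forall>x\<in>A'. Rle B x m" if "A' \<subseteq> A" "A' \<noteq> {}" for A'
  proof -
    have "finite A'" using that fin finite_subset by blast
    moreover have "\<forall>x\<in>A'. \<forall>y\<in>A'. Rle B x y \<or> Rle B y x" using that tot by blast
    ultimately show ?thesis using finite_total_max[of A' "Rle B", OF _ _ _ trB] that(2) by blast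
  qed
  have mn: "\<exists>m\<in>A. \<forall>x\<in>A. Rle B m x"
  proof -
    have "\<forall>x\<in>A. \<forall>y\<in>A. Rle B y x \<or> Rle B x y" using tot by blast
    thus ?thesis using finite_total_max[of A "\<lambda>x y. Rle B y x", OF _ _ _ trB'] fin ne by blast
  qed
  show ?case
  proof (cases "card A \<le> 3")
    case True
    obtain M where M: "M\<in>A" "\<forall>x\<in>A. Rle B x M" using mx[of A] ne by blast
    obtain m where m: "m\<in>A" "\<forall>x\<in>A. Rle B m x" using mn by blast
    have mM: "Rle UNIV m M" using m M RleBS by blast
    show ?thesis
    proof (cases "m \<in> K")
      case mK: True
      show ?thesis
      proof (cases "m = M")
        case True
        have "A = {m}"
        proof
          show "A \<subseteq> {m}"
          proof
            fix x assume x: "x \<in> A"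
            hence "Req B m x" using m M True by (simp add: Req_def)
            thus "x \<in> {m}" using dis m x by blast
          qed
        qed (use m in blast)
        thus ?thesis
          by (intro exI[of _ "{m}"]) (use m AB in \<open>auto simp: Rle_refl\<close>)
      next
        case False
        have nMm: "\<not> Rle UNIV M m"
        proof
          assume h: "Rle UNIV M m"
          hence "M \<in> K" using RleS_K mK by blast
          hence "Rle B M m" using A2[of M m] h AB M m mK by blast
          hence "Req B m M" using m M by (auto simp: Req_def)
          thus False using dis m M False by blast
        qed
        have c2: "card {m, M} = 2" using False by simp
        show ?thesis
          apply (intro exI[of _ "{m, M}"])
          using nMm mM m M AB True c2 Rle_refl[of UNIV M] Rle_refl[of UNIV m] by (auto simp: Req_def)
      qed
    next
      case mK: False
      obtain k where k: "k \<in> K" using Kne by blast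
      define c where "c = m*k*m"
      have cB: "c \<in> B" using Bbi m AB unfolding c_def by blast
      have cK: "c \<in> K" unfolding c_def using KL[OF k] KR by blast
      have cm: "Rle UNIV c m" unfolding c_def by (auto simp: Rle_def mult.assoc)
      have nMc: "\<not> Rle UNIV M c"
      proof
        assume "Rle UNIV M c"
        hence "M \<in> K" using RleS_K cK by blast
        hence "m \<in> K" using RleS_K mM by blast
        thus False using mK by blast
      qed
      have cM: "Rle UNIV c M" using Rle_UNIV_trans[OF cm mM] .
      have "c \<noteq> M" using nMc Rle_refl by metis
      hence c2: "card {c, M} = 2" by simp
      show ?thesis
        apply (intro exI[of _ "{c, M}"])
        using nMc cM cm m M AB cB True c2 Rle_refl[of UNIV M] Rle_refl[of UNIV c] by (auto simp: Req_def)
    qed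
  next
    case False
    obtain t1 where t1: "t1\<in>A" "\<forall>x\<in>A. Rle B x t1" using mx[of A] ne by blast
    define A1 where "A1 = A - {t1}"
    have cA1: "card A1 = card A - 1" using fin t1 by (simp add: A1_def)
    have A1ne: "A1 \<noteq> {}" using cA1 False by auto
    obtain t2 where t2: "t2\<in>A1" "\<forall>x\<in>A1. Rle B x t2" using mx[of A1] A1ne by (auto simp: A1_def)
    define A2 where "A2 = A1 - {t2}"
    have cA2: "card A2 = card A - 2" using fin t2 cA1 by (simp add: A2_def A1_def)
    have A2ne: "A2 \<noteq> {}" using cA2 False by auto
    obtain t3 where t3: "t3\<in>A2" "\<forall>x\<in>A2. Rle B x t3" using mx[of A2] A2ne by (auto simp: A2_def A1_def)
    define A3 where "A3 = A2 - {t3}"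
    have cA3: "card A3 = card A - 3" using fin t3 cA2 by (simp add: A3_def A2_def A1_def)
    have A3ne: "A3 \<noteq> {}" using cA3 False by auto
    obtain t4 where t4: "t4\<in>A3" "\<forall>x\<in>A3. Rle B x t4" using mx[of A3] A3ne by (auto simp: A3_def A2_def A1_def)
    have A3A: "A3 \<subseteq> A" by (auto simp: A3_def A2_def A1_def)
    have lt3: "card A3 < card A" using cA3 False by simp
    have fin3: "finite A3" using fin A3A finite_subset by blast
    have tot3: "\<forall>x\<in>A3. \<forall>y\<in>A3. Rle B x y \<or> Rle B y x" using tot A3A by blast
    have dis3: "\<forall>x\<in>A3. \<forall>y\<in>A3. Req B x y \<longrightarrow> x = y" using dis A3A by blast
    have A3B: "A3 \<subseteq> B" using A3A AB by blast
    obtain E' where E': "finite E'" "E' \<subseteq> B" "\<forall>x\<in>E'. \<forall>y\<in>E'. Rle UNIV x y \<or> Rle UNIV y x"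
      "\<forall>x\<in>E'. \<forall>y\<in>E'. Req UNIV x y \<longrightarrow> x = y" "card A3 + 2 \<le> 3 * card E'"
      "\<forall>e\<in>E'. \<exists>a\<in>A3. Rle UNIV e a"
      using less.hyps[OF lt3 fin3 A3ne A3B tot3 dis3] by (elim exE conjE) blast
    have t4A2: "t4 \<in> A2" "t4 \<noteq> t3" using t4(1) by (auto simp: A3_def)
    have "Rle B t4 t3" using t3(2) t4A2 by blast
    then obtain u1 where u1: "u1 \<in> B" "t4 = t3*u1" using t4A2(2) unfolding Rle_def by blast
    have t2A: "t2 \<in> A" "t2 \<noteq> t1" using t2(1) by (auto simp: A1_def)
    have "Rle B t2 t1" using t1(2) t2A by blast
    then obtain u3 where u3: "u3 \<in> B" "t2 = t1*u3" using t2A(2) unfolding Rle_def by blast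
    have t3A1: "t3 \<in> A1" "t3 \<noteq> t2" using t3(1) by (auto simp: A2_def)
    have key: "\<not> Rle UNIV t1 t4"
    proof
      assume h: "Rle UNIV t1 t4"
      have "Rle B t2 t3" using four[OF u1(1) u3(1) u1(2) u3(2) h] .
      moreover have "Rle B t3 t2" using t2(2) t3A1 by blast
      ultimately have "Req B t2 t3" by (simp add: Req_def)
      moreover have "t2 \<in> A" "t3 \<in> A" using t2A t3A1 by (auto simp: A1_def)
      ultimately show False using dis t3A1(2) by blast
    qed
    have t4A: "t4 \<in> A" using t4(1) A3A by blast
    have t41: "Rle UNIV t4 t1" using t1(2) t4A RleBS by blast
    have le4: "Rle UNIV e t4" if e: "e \<in> E'" for e
    proof -
      from E'(6) e obtain a where a1: "a \<in> A3" and a2: "Rle UNIV e a" by blast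
      have "Rle B a t4" using t4(2) a1 by blast
      hence "Rle UNIV a t4" by (rule RleBS)
      thus "Rle UNIV e t4" by (rule Rle_UNIV_trans[OF a2])
    qed
    have le1: "Rle UNIV e t1" if "e \<in> E'" for e using Rle_UNIV_trans[OF le4[OF that] t41] .
    have nle1: "\<not> Rle UNIV t1 e" if "e \<in> E'" for e using Rle_UNIV_trans[OF _ le4[OF that]] key by blast
    have t1E: "t1 \<notin> E'" using nle1 Rle_refl[of UNIV t1] by blast
    have cE: "card (insert t1 E') = card E' + 1" using t1E E'(1) by simp
    have cA: "card A = card A3 + 3" using cA3 False by simp
    show ?thesis
    proof (intro exI[of _ "insert t1 E'"] conjI)
      show "finite (insert t1 E')" using E'(1) by simp
      show "insert t1 E' \<subseteq> B" using E'(2) t1(1) AB by blast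
      show "\<forall>x\<in>insert t1 E'. \<forall>y\<in>insert t1 E'. Rle UNIV x y \<or> Rle UNIV y x"
        using E'(3) le1 Rle_refl by blast
      show "\<forall>x\<in>insert t1 E'. \<forall>y\<in>insert t1 E'. Req UNIV x y \<longrightarrow> x = y"
        using E'(4) nle1 by (auto simp: Req_def)
      show "card A + 2 \<le> 3 * card (insert t1 E')" using cE cA E'(5) by simp
      show "\<forall>e\<in>insert t1 E'. \<exists>a\<in>A. Rle UNIV e a" using E'(6) A3A t1(1) Rle_refl by blast
    qed
  qed
qed

end

lemma cls_le:
  assumes cl: "\<forall>x\<in>T. \<forall>y\<in>T. x*y \<in> T" and h: "Rclass_le T (Rclass T a) (Rclass T b)"
  shows "Rle T a b"
proof -
  obtain x y where xy: "x \<in> Rclass T a" "y \<in> Rclass T b" "Rle T x y"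
    using h by (auto simp: Rclass_le_def)
  have "Rle T a x" "Rle T y b" using xy by (auto simp: Rclass_def Req_def)
  thus ?thesis using Rle_trans[OF cl] xy(3) by blast
qed

lemma cls_le2:
  assumes "a \<in> T" "b \<in> T" "Rle T a b"
  shows "Rclass_le T (Rclass T a) (Rclass T b)"
  using assms unfolding Rclass_le_def Rclass_def using Req_refl by blast

lemma cls_eq_Req:
  assumes "b \<in> T" "Rclass T a = Rclass T b"
  shows "Req T a b"
proof -
  have "b \<in> Rclass T b" using assms(1) Req_refl by (simp add: Rclass_def)
  hence "b \<in> Rclass T a" using assms(2) by simp
  thus ?thesis by (simp add: Rclass_def)
qed

lemma cls_eq:
  assumes cl: "\<forall>x\<in>T. \<forall>y\<in>T. x*y \<in> T" and h: "Req T a b"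
  shows "Rclass T a = Rclass T b"
  using h Rle_trans[OF cl] unfolding Rclass_def Req_def by blast

theorem theorem3p3:
  fixes K B :: "'a::semigroup_mult set" and n :: nat
  assumes "R_height (UNIV :: 'a set) < \<infinity>"
    and "is_kernel K" and "completely_simple K"
    and "bi_ideal B"
    and "\<exists>C. finite C \<and> Rchain UNIV C \<and> (\<forall>X\<in>C. X \<inter> B \<noteq> {}) \<and> card C = n"
    and "\<And>C. finite C \<Longrightarrow> Rchain UNIV C \<Longrightarrow> (\<forall>X\<in>C. X \<inter> B \<noteq> {}) \<Longrightarrow> card C \<le> n"
  shows "R_height B \<le> enat (3 * n - 2)"
proof -
  have Kid: "ideal_in UNIV K" using assms(2) by (simp add: is_kernel_def)
  have Bcl: "\<forall>x\<in>B. \<forall>y\<in>B. x*y \<in> B" using assms(4) by (simp add: bi_ideal_def)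
  have bound: "card C \<le> 3*n - 2" if C: "finite C" "Rchain B C" for C
  proof (cases "C = {}")
    case True thus ?thesis by simp
  next
    case False
    have "C \<subseteq> Rclass B ` B" using C(2) by (simp add: Rchain_def Rclasses_def)
    then obtain A where A: "A \<subseteq> B" "inj_on (Rclass B) A" "C = Rclass B ` A"
      by (auto simp: subset_image_inj)
    have finA: "finite A" using C(1) A finite_image_iff by blast
    have cardA: "card C = card A" using A card_image by blast
    have Ane: "A \<noteq> {}" using False A by blast
    have totA: "\<forall>x\<in>A. \<forall>y\<in>A. Rle B x y \<or> Rle B y x"
    proof (intro ballI)
      fix x y assume "x\<in>A" "y\<in>A"
      hence "Rclass B x \<in> C" "Rclass B y \<in> C" using A by auto
      hence "Rclass_le B (Rclass B x) (Rclass B y) \<or> Rclass_le B (Rclass B y) (Rclass B x)"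
        using C(2) by (simp add: Rchain_def)
      thus "Rle B x y \<or> Rle B y x" using cls_le[OF Bcl] by blast
    qed
    have disA: "\<forall>x\<in>A. \<forall>y\<in>A. Req B x y \<longrightarrow> x = y"
      using cls_eq[OF Bcl] A(2) by (auto simp: inj_on_def)
    obtain E where E: "finite E" "E \<subseteq> B" "\<forall>x\<in>E. \<forall>y\<in>E. Rle UNIV x y \<or> Rle UNIV y x"
      "\<forall>x\<in>E. \<forall>y\<in>E. Req UNIV x y \<longrightarrow> x = y" "card A + 2 \<le> 3 * card E"
      using main[OF Kid assms(3) assms(4) finA Ane A(1) totA disA] by blast
    let ?D = "Rclass UNIV ` E"
    have injE: "inj_on (Rclass UNIV) E"
      unfolding inj_on_def using E(4) cls_eq_Req[of _ UNIV] by blast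
    have cD: "card ?D = card E" using injE card_image by blast
    have "finite ?D" using E(1) by simp
    moreover have "Rchain UNIV ?D"
      unfolding Rchain_def Rclasses_def using E(3) cls_le2[of _ UNIV] by blast
    moreover have "\<forall>X\<in>?D. X \<inter> B \<noteq> {}"
    proof
      fix X assume "X \<in> ?D"
      then obtain x where x: "x \<in> E" "X = Rclass UNIV x" by blast
      have "x \<in> X" using x Req_refl by (simp add: Rclass_def)
      thus "X \<inter> B \<noteq> {}" using x E(2) by blast
    qed
    ultimately have "card ?D \<le> n" using assms(6) by blast
    thus ?thesis using cD E(5) cardA by linarith
  qed
  show ?thesis
    unfolding R_height_def
    by (rule Sup_least) (auto intro: bound)
qed

end
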